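(* Let $P$ be the uniform distribution on $[0,1]$, let $\beta=\{\frac14,\frac12\}$, and let $V_n$ ($n\geq2$) be the $n$th conditional quantization error of $P$ with respect to $\beta$, with $V_\infty=\lim_{n\to\infty}V_n$. Then the conditional quantization dimension \[D(P)=\lim_{n\to\infty}\frac{2\log n}{-\log(V_n-V_\infty)}\] exists and $D(P)=1$.
   Context: For a Borel probability measure $P$ on $\mathbb{R}$ and a finite set $\beta\subset\mathbb{R}$ with $\mathrm{card}(\beta)=r$, for $n\geq r$ the $n$th conditional quantization error is $V_n=\inf\{\int\min_{a\in\alpha\cup\beta}(x-a)^2\,dP(x):\alpha\subset\mathbb{R},\ \mathrm{card}(\alpha)\leq n-r\}$. *)

theory Defs
  imports "HOL-Probability.Probability"
begin

definition distortion :: "real measure \<Rightarrow> real set \<Rightarrow> real" where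
  "distortion M A = (\<integral>x. Min ((\<lambda>a. (x - a)^2) ` A) \<partial>M)"

text \<open>n-th conditional quantization error of M with respect to the finite set beta
  (meaningful for n \<ge> card beta).\<close>
definition cond_quant_err :: "real measure \<Rightarrow> real set \<Rightarrow> nat \<Rightarrow> real" where
  "cond_quant_err M \<beta> n =
     Inf {distortion M (\<alpha> \<union> \<beta>) | \<alpha>. finite \<alpha> \<and> card \<alpha> \<le> n - card \<beta>}"

end

theory Submission imports Defs "HOL-Real_Asymp.Real_Asymp" begin

abbreviation "UM \<equiv> uniform_measure lborel {0..1::real}"

lemma UM_prob: "prob_space UM"
  by (rule prob_space_uniform_measure) auto

lemma Min_sq_nonneg: "finite A \<Longrightarrow> A \<noteq> {} \<Longrightarrow> 0 \<le> Min ((\<lambda>a. (x-a)^2) ` (A::real set))"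
  by (simp add: Min_ge_iff)

lemma f_meas: "finite A \<Longrightarrow> (\<lambda>x. Min ((\<lambda>a. (x-a)^2) ` (A::real set))) \<in> borel_measurable UM"
  by measurable

lemma f_int:
  assumes "finite A" "A \<noteq> {}"
  shows "integrable UM (\<lambda>x. Min ((\<lambda>a. (x-a)^2) ` (A::real set)))"
proof -
  obtain a0 where a0: "a0 \<in> A" using assms by blast
  interpret prob_space UM by (rule UM_prob)
  show ?thesis
  proof (rule Bochner_Integration.integrable_bound[OF integrable_const[of "(1+\<bar>a0\<bar>)^2"]])
    show "(\<lambda>x. Min ((\<lambda>a. (x-a)^2) ` A)) \<in> borel_measurable UM" using assms f_meas by blast
    show "AE x in UM. norm (Min ((\<lambda>a. (x-a)^2) ` A)) \<le> norm ((1+\<bar>a0\<bar>)^2::real)"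
    proof (subst AE_uniform_measure, simp, simp, rule AE_I2, rule impI)
      fix x :: real assume x: "x \<in> {0..1}"
      have "Min ((\<lambda>a. (x-a)^2) ` A) \<le> (x-a0)^2" using assms a0 by (intro Min_le) auto
      also have "\<dots> \<le> (1+\<bar>a0\<bar>)^2"
        unfolding abs_le_square_iff[symmetric] using x by auto
      finally show "norm (Min ((\<lambda>a. (x-a)^2) ` A)) \<le> norm ((1+\<bar>a0\<bar>)^2::real)"
        using Min_sq_nonneg[OF assms, of x] by simp
    qed
  qed
qed


lemma dist_lower:
  assumes A: "finite A" "A \<noteq> {}" and n: "card A \<le> n" "n \<ge> 1"
  shows "1 / (32 * (real n)^2) \<le> distortion UM A"
proof -
  interpret prob_space UM by (rule UM_prob)
  define f where "f x = Min ((\<lambda>a. (x-a)^2) ` A)" for x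
  define r where "r = 1 / (4 * real n)"
  have r: "r > 0" using n by (simp add: r_def)
  define S where "S = {x. r^2 \<le> f x}"
  have fm: "f \<in> borel_measurable UM" unfolding f_def using A f_meas by blast
  have Ssets: "S \<in> sets UM" unfolding S_def using fm by measurable
  have fi: "integrable UM f" unfolding f_def using f_int[OF A] .
  have "r^2 * measure UM S = (\<integral>x. r^2 * indicator S x \<partial>UM)"
    using Ssets by simp
  also have "\<dots> \<le> (\<integral>x. f x \<partial>UM)"
  proof (rule integral_mono)
    show "integrable UM (\<lambda>x. r^2 * indicator S x)" using emeasure_finite[of S] by (intro integrable_mult_right integrable_real_indicator Ssets) (simp del: emeasure_uniform_measure add: less_top[symmetric])
    show "integrable UM f" by (rule fi)
    fix x show "r^2 * indicator S x \<le> f x"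
      using Min_sq_nonneg[OF A, of x] by (auto simp: S_def f_def indicator_def)
  qed
  also have "\<dots> = distortion UM A" by (simp add: distortion_def f_def)
  finally have 1: "r^2 * measure UM S \<le> distortion UM A" .
  have sub: "space UM - S \<subseteq> (\<Union>a\<in>A. {a-r<..<a+r})"
  proof
    fix x assume "x \<in> space UM - S"
    then have "f x < r^2" by (auto simp: S_def)
    then obtain a where a: "a \<in> A" "(x-a)^2 < r^2" unfolding f_def using A by (auto simp: Min_less_iff)
    then have "\<bar>x-a\<bar> < r" using r by (metis abs_of_pos power2_abs power_less_imp_less_base abs_ge_zero)
    then show "x \<in> (\<Union>a\<in>A. {a-r<..<a+r})" using a by (auto simp: abs_less_iff intro!: bexI[of _ a])
  qed
  have ballm: "measure UM {a-r<..<a+r} \<le> 2*r" for a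
  proof -
    have "measure UM {a-r<..<a+r} = measure lborel ({0..1} \<inter> {a-r<..<a+r}) / measure lborel {0..1::real}"
      by (rule measure_uniform_measure) auto
    also have "\<dots> = measure lborel ({0..1} \<inter> {a-r<..<a+r})" by simp
    also have "\<dots> \<le> measure lborel {a-r<..<a+r}"
      using fmeasurable_box[of "a-r" "a+r"] unfolding box_real by (intro measure_mono_fmeasurable) auto
    also have "\<dots> = 2*r" using r by simp
    finally show ?thesis .
  qed
  have "measure UM (space UM - S) \<le> measure UM (\<Union>a\<in>A. {a-r<..<a+r})"
    using sub A by (intro finite_measure_mono) (auto intro!: sets.finite_UN)
  also have "\<dots> \<le> (\<Sum>a\<in>A. measure UM {a-r<..<a+r})"
    using A by (intro finite_measure_subadditive_finite) auto
  also have "\<dots> \<le> (\<Sum>a\<in>A. 2*r)" by (intro sum_mono ballm)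
  also have "\<dots> = card A * (2*r)" by simp
  also have "\<dots> \<le> n * (2*r)" using n r by (intro mult_right_mono) auto
  also have "\<dots> = 1/2" using n by (simp add: r_def)
  finally have "measure UM (space UM - S) \<le> 1/2" .
  then have "measure UM S \<ge> 1/2" using prob_compl[OF Ssets] by simp
  then have "r^2 * (1/2) \<le> r^2 * measure UM S" by (intro mult_left_mono) auto
  also have "r^2 * (1/2) = 1 / (32 * (real n)^2)" by (simp add: r_def power2_eq_square)
  finally show ?thesis using 1 by linarith
qed


lemma cover:
  assumes m: "m \<ge> 1" and x: "0 \<le> x" "x \<le> (1::real)"
  shows "\<exists>k<m. \<bar>x - (2*real k+1)/(2*real m)\<bar> \<le> 1/(2*real m)"
proof -
  define k where "k = min (nat \<lfloor>x*m\<rfloor>) (m-1)"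
  have xm: "0 \<le> x*m" "x*m \<le> m" using x m by (auto simp: mult_left_le_one_le)
  have km: "k < m" using m by (simp add: k_def)
  have k1: "real k \<le> x*m"
  proof -
    have "real (nat \<lfloor>x*m\<rfloor>) \<le> x*m" using xm by linarith
    then show ?thesis unfolding k_def by linarith
  qed
  have k2: "x*m \<le> real k + 1"
  proof (cases "nat \<lfloor>x*m\<rfloor> \<le> m-1")
    case True
    then have "k = nat \<lfloor>x*m\<rfloor>" by (simp add: k_def)
    then show ?thesis using xm by linarith
  next
    case False
    then have "k = m-1" by (simp add: k_def)
    then show ?thesis using xm m by (simp add: of_nat_diff)
  qed
  have mpos: "real m > 0" using m by simp
  have "\<bar>x - (2*real k+1)/(2*real m)\<bar> = \<bar>2*(x*m) - 2*real k - 1\<bar> / (2*real m)"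
    using mpos by (simp add: field_simps abs_div flip: abs_of_pos)
  also have "\<dots> \<le> 1/(2*real m)" using k1 k2 mpos by (intro divide_right_mono) auto
  finally show ?thesis using km by blast
qed

definition grid :: "nat \<Rightarrow> real set" where
  "grid m = (\<lambda>k. (2*real k+1)/(2*real m)) ` {..<m}"

lemma grid_finite: "finite (grid m)" and grid_card: "card (grid m) \<le> m"
  unfolding grid_def using card_image_le[of "{..<m}"] by auto

lemma dist_upper:
  assumes A: "finite A" "grid m \<subseteq> A" and m: "m \<ge> 1"
  shows "distortion UM A \<le> 1 / (4 * (real m)^2)"
proof -
  interpret prob_space UM by (rule UM_prob)
  have Ane: "A \<noteq> {}" using A m by (auto simp: grid_def lessThan_empty_iff)
  have "distortion UM A = (\<integral>x. Min ((\<lambda>a. (x-a)^2) ` A) \<partial>UM)" by (simp add: distortion_def)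
  also have "\<dots> \<le> (\<integral>x. 1 / (4 * (real m)^2) \<partial>UM)"
  proof (rule integral_mono_AE)
    show "integrable UM (\<lambda>x. Min ((\<lambda>a. (x-a)^2) ` A))" using f_int[OF A(1) Ane] .
    show "integrable UM (\<lambda>x. 1 / (4 * (real m)^2))" by simp
    show "AE x in UM. Min ((\<lambda>a. (x-a)^2) ` A) \<le> 1 / (4 * (real m)^2)"
    proof (subst AE_uniform_measure, simp, simp, rule AE_I2, rule impI)
      fix x :: real assume x: "x \<in> {0..1}"
      obtain k where k: "k < m" "\<bar>x - (2*real k+1)/(2*real m)\<bar> \<le> 1/(2*real m)"
        using cover[OF m, of x] x by auto
      have ka: "(2*real k+1)/(2*real m) \<in> A" using k A by (auto simp: grid_def)
      have "Min ((\<lambda>a. (x-a)^2) ` A) \<le> (x - (2*real k+1)/(2*real m))^2"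
        using A ka by (intro Min_le) auto
      also have "\<dots> = \<bar>x - (2*real k+1)/(2*real m)\<bar>^2" by simp
      also have "\<dots> \<le> (1/(2*real m))^2" using k by (intro power_mono) auto
      also have "\<dots> = 1 / (4 * (real m)^2)" by (simp add: power2_eq_square)
      finally show "Min ((\<lambda>a. (x-a)^2) ` A) \<le> 1 / (4 * (real m)^2)" .
    qed
  qed
  also have "\<dots> = 1 / (4 * (real m)^2)" by simp
  finally show ?thesis .
qed


lemma card_beta: "card {1/4, 1/2::real} = 2" by simp

lemma V_lower:
  assumes n: "n \<ge> 2"
  shows "1 / (32 * (real n)^2) \<le> cond_quant_err UM {1/4, 1/2} n"
  unfolding cond_quant_err_def card_beta
proof (rule cInf_greatest)
  show "{distortion UM (\<alpha> \<union> {1/4, 1/2}) |\<alpha>. finite \<alpha> \<and> card \<alpha> \<le> n - 2} \<noteq> {}"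
    by (rule ccontr) (auto dest: spec[of _ "{}"])
  fix y assume "y \<in> {distortion UM (\<alpha> \<union> {1/4, 1/2}) |\<alpha>. finite \<alpha> \<and> card \<alpha> \<le> n - 2}"
  then obtain \<alpha> where a: "finite \<alpha>" "card \<alpha> \<le> n - 2" "y = distortion UM (\<alpha> \<union> {1/4, 1/2})" by auto
  have "card (\<alpha> \<union> {1/4, 1/2}) \<le> card \<alpha> + card {1/4, 1/2::real}" by (rule card_Un_le)
  then have "card (\<alpha> \<union> {1/4, 1/2}) \<le> n" using a n by simp
  then show "1 / (32 * (real n)^2) \<le> y" unfolding a(3) using a n
    by (intro dist_lower) auto
qed

lemma V_upper:
  assumes n: "n \<ge> 3"
  shows "cond_quant_err UM {1/4, 1/2} n \<le> 1 / (4 * (real n - 2)^2)"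
  unfolding cond_quant_err_def card_beta
proof -
  let ?T = "{distortion UM (\<alpha> \<union> {1/4, 1/2}) |\<alpha>. finite \<alpha> \<and> card \<alpha> \<le> n - 2}"
  have mem: "distortion UM (grid (n-2) \<union> {1/4, 1/2}) \<in> ?T"
    using grid_finite grid_card by blast
  have bdd: "bdd_below ?T"
  proof (rule bdd_belowI)
    fix y assume "y \<in> ?T"
    then obtain \<alpha> where a: "finite \<alpha>" "card \<alpha> \<le> n - 2" "y = distortion UM (\<alpha> \<union> {1/4, 1/2})" by auto
    have "card (\<alpha> \<union> {1/4, 1/2}) \<le> card \<alpha> + card {1/4, 1/2::real}" by (rule card_Un_le)
    then have "card (\<alpha> \<union> {1/4, 1/2}) \<le> n" using a n by simp
    then show "1 / (32 * (real n)^2) \<le> y" unfolding a(3) using a n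
      by (intro dist_lower) auto
  qed
  have "Inf ?T \<le> distortion UM (grid (n-2) \<union> {1/4, 1/2})" by (rule cInf_lower[OF mem bdd])
  also have "\<dots> \<le> 1 / (4 * (real (n-2))^2)"
    using n by (intro dist_upper) (auto simp: grid_finite)
  also have "real (n-2) = real n - 2" using n by simp
  finally show "Inf ?T \<le> 1 / (4 * (real n - 2)^2)" .
qed

theorem theorem3p11:
  fixes V :: "nat \<Rightarrow> real" and Vinf :: real
  defines "V \<equiv> cond_quant_err (uniform_measure lborel {0..1}) {1/4, 1/2}"
    and "Vinf \<equiv> lim V"
  shows "convergent V \<and>
         ((\<lambda>n. 2 * ln (real n) / (- ln (V n - Vinf))) \<longlongrightarrow> 1) sequentially"
proof -
  have lo: "eventually (\<lambda>n. 1 / (32 * (real n)^2) \<le> V n) sequentially"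
    using eventually_ge_at_top[of 2] by eventually_elim (simp add: V_def V_lower)
  have up: "eventually (\<lambda>n. V n \<le> 1 / (4 * (real n - 2)^2)) sequentially"
    using eventually_ge_at_top[of 3] by eventually_elim (simp add: V_def V_upper)
  have l1: "(\<lambda>n. 1 / (32 * (real n)^2)) \<longlonglongrightarrow> 0" by real_asymp
  have l2: "(\<lambda>n. 1 / (4 * (real n - 2)^2)) \<longlonglongrightarrow> 0" by real_asymp
  have V0: "V \<longlonglongrightarrow> 0" by (rule tendsto_sandwich[OF lo up l1 l2])
  have conv: "convergent V" using V0 by (auto simp: convergent_def)
  have Vinf: "Vinf = 0" unfolding Vinf_def using V0 by (rule limI)
  have e1: "eventually (\<lambda>n. 0 < - ln (1 / (4 * (real n - 2)^2))) sequentially" by real_asymp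
  have e2: "eventually (\<lambda>n. 0 < 1 / (32 * (real n)^2)) sequentially" by real_asymp
  have e3: "eventually (\<lambda>n. 0 \<le> 2 * ln (real n)) sequentially" by real_asymp
  have lo2: "eventually (\<lambda>n. 2 * ln (real n) / (- ln (1 / (32 * (real n)^2))) \<le> 2 * ln (real n) / (- ln (V n - Vinf))) sequentially"
    using lo up e1 e2 e3
  proof eventually_elim
    case (elim n)
    have vpos: "0 < V n" using elim by linarith
    have "ln (V n) \<le> ln (1 / (4 * (real n - 2)^2))" using elim vpos by (subst ln_le_cancel_iff) auto
    then have p: "0 < - ln (V n)" using elim by linarith
    have r: "ln (1 / (32 * (real n)^2)) \<le> ln (V n)" using elim vpos by (subst ln_le_cancel_iff) auto
    then have q: "ln (1 / (32 * (real n)^2)) < 0" using p by linarith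
    have "0 < ln (1 / (32 * (real n)^2)) * ln (V n)" using p q by (intro mult_neg_neg) auto
    then show ?case unfolding Vinf using p r elim by (intro divide_left_mono) auto
  qed
  have up2: "eventually (\<lambda>n. 2 * ln (real n) / (- ln (V n - Vinf)) \<le> 2 * ln (real n) / (- ln (1 / (4 * (real n - 2)^2)))) sequentially"
    using lo up e1 e2 e3
  proof eventually_elim
    case (elim n)
    have vpos: "0 < V n" using elim by linarith
    have r: "ln (V n) \<le> ln (1 / (4 * (real n - 2)^2))" using elim vpos by (subst ln_le_cancel_iff) auto
    then have q: "ln (V n) < 0" using elim by linarith
    have "0 < ln (V n) * ln (1 / (4 * (real n - 2)^2))" using mult_neg_neg[OF q, of "ln (1 / (4 * (real n - 2)^2))"] elim(3) by linarith
    then show ?case unfolding Vinf using r elim by (intro divide_left_mono) auto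
  qed
  have m1: "(\<lambda>n. 2 * ln (real n) / (- ln (1 / (32 * (real n)^2)))) \<longlonglongrightarrow> 1" by real_asymp
  have m2: "(\<lambda>n. 2 * ln (real n) / (- ln (1 / (4 * (real n - 2)^2)))) \<longlonglongrightarrow> 1" by real_asymp
  show ?thesis using conv tendsto_sandwich[OF lo2 up2 m1 m2] by simp
qed

end
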